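(* Let $E=\frac{\sqrt{15}}{4}\begin{pmatrix}1&0\\0&0\end{pmatrix}$ and $B=\frac18\begin{pmatrix}1&1\\1&1\end{pmatrix}$, with Bloch representations $e^0=\sqrt{15}/4$, $\vec e=(0,0,\sqrt{15}/4)$, $b^0=1/4$, $\vec b=\tfrac14(1,0,0)$. Then $\|\vec e\|^2+\|\vec b\|^2-(\vec e\cdot\vec b)^2=1$, yet the two-outcome POVMs $(E,\mathbb 1-E)$ and $(B,\mathbb 1-B)$ are not jointly measurable.
   Context: A qubit effect $E$ is written $E=\tfrac12(e^0\mathbb 1+\vec e\cdot\vec\sigma)$ with $\vec\sigma$ the vector of Pauli matrices. Two POVMs $(E_i)$, $(B_j)$ are jointly measurable if there is a POVM $(N_{ij})$ with $\sum_jN_{ij}=E_i$, $\sum_iN_{ij}=B_j$. *)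

theory Defs
  imports "HOL-Analysis.Analysis"
begin

type_synonym qmat = "complex^2^2"

definition mat2 :: "complex \<Rightarrow> complex \<Rightarrow> complex \<Rightarrow> complex \<Rightarrow> qmat" where
  "mat2 a b c d = vector [vector [a, b], vector [c, d]]"

definition pauli_x :: qmat where "pauli_x = mat2 0 1 1 0"
definition pauli_y :: qmat where "pauli_y = mat2 0 (- \<i>) \<i> 0"
definition pauli_z :: qmat where "pauli_z = mat2 1 0 0 (-1)"

definition cscale :: "complex \<Rightarrow> qmat \<Rightarrow> qmat" where
  "cscale c A = (\<chi> i j. c * A$i$j)"

definition bloch :: "real \<Rightarrow> real^3 \<Rightarrow> qmat" where
  "bloch e0 e = cscale (complex_of_real (1/2))
     (cscale (complex_of_real e0) (mat 1) + cscale (complex_of_real (e$1)) pauli_x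
      + cscale (complex_of_real (e$2)) pauli_y + cscale (complex_of_real (e$3)) pauli_z)"

definition psd :: "qmat \<Rightarrow> bool" where
  "psd A \<longleftrightarrow> (\<forall>v::complex^2. let q = (\<Sum>i\<in>UNIV. cnj (v$i) * (A *v v)$i) in
                  q \<in> \<real> \<and> 0 \<le> Re q)"

definition povm :: "('i::finite \<Rightarrow> qmat) \<Rightarrow> bool" where
  "povm E \<longleftrightarrow> (\<forall>i. psd (E i)) \<and> (\<Sum>i\<in>UNIV. E i) = mat 1"

definition jointly_measurable ::
    "('i::finite \<Rightarrow> qmat) \<Rightarrow> ('j::finite \<Rightarrow> qmat) \<Rightarrow> bool" where
  "jointly_measurable E B \<longleftrightarrow>
     (\<exists>N :: 'i \<Rightarrow> 'j \<Rightarrow> qmat. povm (\<lambda>(i,j). N i j) \<and>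
        (\<forall>i. (\<Sum>j\<in>UNIV. N i j) = E i) \<and> (\<forall>j. (\<Sum>i\<in>UNIV. N i j) = B j))"

definition binary_povm :: "qmat \<Rightarrow> bool \<Rightarrow> qmat" where
  "binary_povm X = (\<lambda>b. if b then X else mat 1 - X)"

end

theory Submission
  imports Defs
begin

lemma mat2_nth [simp]:
  "mat2 a b c d $1$1 = a" "mat2 a b c d $1$2 = b" "mat2 a b c d $2$1 = c" "mat2 a b c d $2$2 = d"
  by (simp_all add: mat2_def)

lemma mat2_eq: "(M::qmat) = mat2 (M$1$1) (M$1$2) (M$2$1) (M$2$2)"
  by (simp add: vec_eq_iff forall_2)

lemma qmat_eqI: "(M::qmat)$1$1 = N$1$1 \<Longrightarrow> M$1$2 = N$1$2 \<Longrightarrow> M$2$1 = N$2$1 \<Longrightarrow> M$2$2 = N$2$2 \<Longrightarrow> M = N"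
  by (simp add: vec_eq_iff forall_2)

lemma mat2_ops [simp]:
  "cscale k (mat2 a b c d) = mat2 (k*a) (k*b) (k*c) (k*d)"
  "mat2 a b c d + mat2 a' b' c' d' = mat2 (a+a') (b+b') (c+c') (d+d')"
  "mat2 a b c d - mat2 a' b' c' d' = mat2 (a-a') (b-b') (c-c') (d-d')"
  by (rule qmat_eqI; simp add: cscale_def)+

lemma mat1_2: "(mat 1 :: qmat) = mat2 1 0 0 1"
  by (rule qmat_eqI; simp add: mat_def)

lemma quad2: "(\<alpha>::real) \<ge> 0 \<Longrightarrow> \<gamma> \<ge> 0 \<Longrightarrow> \<alpha>*\<gamma> \<ge> \<beta>^2 \<Longrightarrow> 0 \<le> \<alpha>*x^2 + 2*\<beta>*x*y + \<gamma>*y^2"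
proof (cases "\<alpha> = 0")
  case True
  assume "\<gamma> \<ge> 0" "\<alpha>*\<gamma> \<ge> \<beta>^2"
  then have "\<beta> = 0" using True by simp
  then show ?thesis using True \<open>\<gamma> \<ge> 0\<close> by simp
next
  case False
  assume h: "\<alpha> \<ge> 0" "\<gamma> \<ge> 0" "\<alpha>*\<gamma> \<ge> \<beta>^2"
  then have a: "\<alpha> > 0" using False by simp
  have "\<alpha>*(\<alpha>*x^2 + 2*\<beta>*x*y + \<gamma>*y^2) = (\<alpha>*x+\<beta>*y)^2 + (\<alpha>*\<gamma>-\<beta>^2)*y^2"
    by (simp add: algebra_simps power2_eq_square)
  also have "\<dots> \<ge> 0" using h by simp
  finally show ?thesis using a by (simp add: zero_le_mult_iff)
qed

lemma psd_mat2:
  assumes "\<alpha> \<ge> 0" "\<gamma> \<ge> 0" "\<alpha>*\<gamma> \<ge> \<beta>^2"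
  shows "psd (mat2 (of_real \<alpha>) (of_real \<beta>) (of_real \<beta>) (of_real \<gamma>))"
  unfolding psd_def Let_def
proof
  fix v :: "complex^2"
  obtain x1 y1 where v1: "v$1 = Complex x1 y1" by (metis complex.exhaust)
  obtain x2 y2 where v2: "v$2 = Complex x2 y2" by (metis complex.exhaust)
  have q: "(\<Sum>i\<in>UNIV. cnj (v$i) * (mat2 (of_real \<alpha>) (of_real \<beta>) (of_real \<beta>) (of_real \<gamma>) *v v)$i)
     = of_real ((\<alpha>*x1^2 + 2*\<beta>*x1*x2 + \<gamma>*x2^2) + (\<alpha>*y1^2 + 2*\<beta>*y1*y2 + \<gamma>*y2^2))"
    by (simp add: sum_2 matrix_vector_mult_def v1 v2 complex_eq_iff power2_eq_square algebra_simps)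
  show "(\<Sum>i\<in>UNIV. cnj (v$i) * (mat2 (of_real \<alpha>) (of_real \<beta>) (of_real \<beta>) (of_real \<gamma>) *v v)$i) \<in> \<real> \<and>
    0 \<le> Re (\<Sum>i\<in>UNIV. cnj (v$i) * (mat2 (of_real \<alpha>) (of_real \<beta>) (of_real \<beta>) (of_real \<gamma>) *v v)$i)"
    unfolding q using quad2[OF assms, of x1 x2] quad2[OF assms, of y1 y2] by simp
qed

lemma psd_quad:
  assumes "psd M"
  shows "0 \<le> p^2*Re(M$1$1) + p*r*Re(M$1$2+M$2$1) + r^2*Re(M$2$2)"
proof -
  from assms have "0 \<le> Re (\<Sum>i\<in>UNIV. cnj ((vector [of_real p, of_real r]::complex^2)$i) * (M *v vector [of_real p, of_real r])$i)"
    unfolding psd_def Let_def by blast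
  then show ?thesis
    by (simp add: sum_2 matrix_vector_mult_def power2_eq_square algebra_simps)
qed

theorem mainTheorem4:
  fixes E B :: qmat and e0 b0 :: real and e b :: "real^3"
  assumes "E = cscale (complex_of_real (sqrt 15 / 4)) (mat2 1 0 0 0)"
      and "B = cscale (complex_of_real (1/8)) (mat2 1 1 1 1)"
      and "e0 = sqrt 15 / 4" and "e = vector [0, 0, sqrt 15 / 4]"
      and "b0 = 1/4" and "b = (1/4) *\<^sub>R vector [1, 0, 0]"
  shows "E = bloch e0 e \<and> B = bloch b0 b
    \<and> norm e ^ 2 + norm b ^ 2 - (e \<bullet> b) ^ 2 = 1
    \<and> povm (binary_povm E) \<and> povm (binary_povm B)
    \<and> \<not> jointly_measurable (binary_povm E) (binary_povm B)"
proof -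
  define a where "a = sqrt 15 / 4"
  have a2: "a^2 = 15/16" unfolding a_def by (simp add: power_divide)
  have a0: "a \<ge> 0" unfolding a_def by simp
  have a1: "a < 1"
  proof (rule ccontr)
    assume "\<not> a < 1" then have "1^2 \<le> a^2" by (intro power_mono) auto
    then show False using a2 by simp
  qed
  have a78: "a > 7/8"
  proof (rule ccontr)
    assume "\<not> a > 7/8" then have "a^2 \<le> (7/8)^2" using a0 by (intro power_mono) auto
    then show False using a2 by (simp add: power2_eq_square)
  qed
  have E: "E = mat2 (of_real a) 0 0 0" using assms(1) unfolding a_def by simp
  have B: "B = mat2 (1/8) (1/8) (1/8) (1/8)" using assms(2) by simp
  have IE: "mat 1 - E = mat2 (of_real (1-a)) 0 0 1" unfolding E mat1_2 by simp
  have IB: "mat 1 - B = mat2 (7/8) (-1/8) (-1/8) (7/8)" unfolding B mat1_2 by simp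
  have s1: "E = bloch e0 e"
    unfolding E bloch_def assms(3,4) mat1_2 pauli_x_def pauli_y_def pauli_z_def a_def
    by (rule qmat_eqI; simp)
  have s2: "B = bloch b0 b"
    unfolding B bloch_def assms(5,6) mat1_2 pauli_x_def pauli_y_def pauli_z_def
    by (rule qmat_eqI; simp)
  have s3: "norm e ^ 2 + norm b ^ 2 - (e \<bullet> b) ^ 2 = 1"
    unfolding power2_norm_eq_inner assms(4,6) a_def[symmetric]
    using a2 by (simp add: inner_vec_def sum_3 power2_eq_square)
  have pE: "psd E" unfolding E using psd_mat2[of a 0 0] a0 by simp
  have pIE: "psd (mat 1 - E)" unfolding IE using psd_mat2[of "1-a" 1 0] a1 by simp
  have pB: "psd B" unfolding B using psd_mat2[of "1/8" "1/8" "1/8"] by (simp add: power2_eq_square)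
  have pIB: "psd (mat 1 - B)" unfolding IB using psd_mat2[of "7/8" "7/8" "-1/8"] by (simp add: power2_eq_square)
  have s4: "povm (binary_povm E)" unfolding povm_def binary_povm_def
    using pE pIE by (simp add: UNIV_bool)
  have s5: "povm (binary_povm B)" unfolding povm_def binary_povm_def
    using pB pIB by (simp add: UNIV_bool)
  have s6: "\<not> jointly_measurable (binary_povm E) (binary_povm B)"
  proof
    assume "jointly_measurable (binary_povm E) (binary_povm B)"
    then obtain N :: "bool \<Rightarrow> bool \<Rightarrow> qmat" where
      P: "povm (\<lambda>(i,j). N i j)" and R: "\<forall>i. (\<Sum>j\<in>UNIV. N i j) = binary_povm E i"
      and C: "\<forall>j. (\<Sum>i\<in>UNIV. N i j) = binary_povm B j"
      unfolding jointly_measurable_def by blast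
    have ps: "psd (N i j)" for i j using P unfolding povm_def by (metis case_prod_conv)
    have r1: "N True False + N True True = E" using R[rule_format, of True] by (simp add: UNIV_bool binary_povm_def)
    have r2: "N False False + N False True = mat 1 - E" using R[rule_format, of False] by (simp add: UNIV_bool binary_povm_def)
    have c1: "N False True + N True True = B" using C[rule_format, of True] by (simp add: UNIV_bool binary_povm_def)
    have c2: "N False False + N True False = mat 1 - B" using C[rule_format, of False] by (simp add: UNIV_bool binary_povm_def)
    define A where "A = N True True"
    have Bm: "N True False = E - A" using r1 unfolding A_def by (metis add_diff_cancel)
    have Cm: "N False True = B - A" using c1 unfolding A_def by (metis add_diff_cancel)
    have Dm: "N False False = mat 1 - E - (B - A)" using r2 Cm by (metis add_diff_cancel)
    have q1: "0 \<le> Re (N True False $2$2)" using psd_quad[OF ps[of True False], of 0 1] by simp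
    have q2: "0 \<le> Re (N False False $1$1)" using psd_quad[OF ps[of False False], of 1 0] by simp
    have q3: "0 \<le> Re(N False True$1$1) - Re(N False True$1$2+N False True$2$1) + Re(N False True$2$2)"
      using psd_quad[OF ps[of False True], of 1 "-1"] by simp
    have q4: "0 \<le> Re(A$1$1) - 2*Re(A$1$2+A$2$1) + 4*Re(A$2$2)"
      using psd_quad[OF ps[of True True], of 1 "-2"] unfolding A_def by (simp add: power2_eq_square)
    have E': "E = mat2 (of_real a) 0 0 0" by (fact E)
    from q1 q2 q3 q4 a78 show False
      unfolding Bm Cm Dm E B mat1_2 by simp
  qed
  show ?thesis using s1 s2 s3 s4 s5 s6 by blast
qed

end
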